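(* Let $m \geq 0$, $n \geq 1$ be integers and let $c = (c^t; c^b)$ be a stable configuration on $K_{m,n}^0$. For $j \in \{1,\ldots,n\}$ define $k_j := |\{ i \in \{1,\ldots,m\} : c^t_i < j\}|$, and let $(\tilde{c}^b_1, \ldots, \tilde{c}^b_n)$ be the non-decreasing rearrangement of $c^b$. Then $c$ is deterministically recurrent if and only if $\tilde{c}^b_j \geq k_j$ for all $j \in \{1, \ldots, n\}$.
   Context: $K_{m,n}^0$ is the complete bipartite graph with "top" vertices $v^t_0, v^t_1, \ldots, v^t_m$ and "bottom" vertices $v^b_1, \ldots, v^b_n$, with an edge between every top vertex and every bottom vertex; $v^t_0$ is the sink. A configuration is a vector $c = (c^t_1, \ldots, c^t_m; c^b_1, \ldots, c^b_n)$ of non-negative integers ($c^*_i$ = number of grains at $v^*_i$). $c$ is stable if $c^t_i < n$ for all $i$ and $c^b_j < m+1$ for all $j$ (number of grains less than the degree). Abelian sandpile model (ASM): an unstable non-sink vertex topples by sending one grain to each of its neighbours (for bottom vertices this includes the sink); grains sent to the sink disappear. Repeated toppling from any configuration reaches a unique stable configuration independent of toppling order. In the Markov chain on stable configurations which at each step adds a grain to a uniformly random non-sink vertex and then stabilises by the ASM, a stable configuration is deterministically recurrent if it is a recurrent state (appears infinitely often). *)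

theory Defs
  imports Main
begin

text \<open>Vertices of K^0_{m,n}: Top 0 is the sink, Top 1..Top m the non-sink top
vertices, Bot 1..Bot n the bottom vertices.\<close>
datatype vert = Top nat | Bot nat

definition is_vertex :: "nat \<Rightarrow> nat \<Rightarrow> vert \<Rightarrow> bool" where
  "is_vertex m n v = (case v of Top i \<Rightarrow> i \<le> m | Bot j \<Rightarrow> 1 \<le> j \<and> j \<le> n)"

definition nonsink :: "nat \<Rightarrow> nat \<Rightarrow> vert \<Rightarrow> bool" where
  "nonsink m n v = (case v of Top i \<Rightarrow> 1 \<le> i \<and> i \<le> m | Bot j \<Rightarrow> 1 \<le> j \<and> j \<le> n)"

definition adj :: "nat \<Rightarrow> nat \<Rightarrow> vert \<Rightarrow> vert \<Rightarrow> bool" where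
  "adj m n u w = (is_vertex m n u \<and> is_vertex m n w \<and>
     ((\<exists>i j. u = Top i \<and> w = Bot j) \<or> (\<exists>i j. u = Bot j \<and> w = Top i)))"

definition deg :: "nat \<Rightarrow> nat \<Rightarrow> vert \<Rightarrow> nat" where
  "deg m n v = (case v of Top _ \<Rightarrow> n | Bot _ \<Rightarrow> m + 1)"

definition config :: "nat \<Rightarrow> nat \<Rightarrow> (vert \<Rightarrow> nat) \<Rightarrow> bool" where
  "config m n c = (\<forall>v. \<not> nonsink m n v \<longrightarrow> c v = 0)"

definition stable :: "nat \<Rightarrow> nat \<Rightarrow> (vert \<Rightarrow> nat) \<Rightarrow> bool" where
  "stable m n c = (config m n c \<and> (\<forall>v. nonsink m n v \<longrightarrow> c v < deg m n v))"

definition topple :: "nat \<Rightarrow> nat \<Rightarrow> vert \<Rightarrow> (vert \<Rightarrow> nat) \<Rightarrow> (vert \<Rightarrow> nat)" where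
  "topple m n v c = (\<lambda>w. if nonsink m n w
      then (if w = v then c w - deg m n v else c w) + (if adj m n v w then 1 else 0)
      else 0)"

definition topple_step :: "nat \<Rightarrow> nat \<Rightarrow> (vert \<Rightarrow> nat) \<Rightarrow> (vert \<Rightarrow> nat) \<Rightarrow> bool" where
  "topple_step m n c c' = (\<exists>v. nonsink m n v \<and> deg m n v \<le> c v \<and> c' = topple m n v c)"

definition add_grain :: "vert \<Rightarrow> (vert \<Rightarrow> nat) \<Rightarrow> (vert \<Rightarrow> nat)" where
  "add_grain v c = c(v := c v + 1)"

text \<open>Transitions of the Markov chain with positive probability: add a grain at
some non-sink vertex (each chosen with probability 1/(m+n) > 0) and stabilise
(the stabilisation is unique, so this relation is its graph).\<close>
definition chain_step :: "nat \<Rightarrow> nat \<Rightarrow> (vert \<Rightarrow> nat) \<Rightarrow> (vert \<Rightarrow> nat) \<Rightarrow> bool" where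
  "chain_step m n c c' = (stable m n c \<and> stable m n c' \<and>
     (\<exists>v. nonsink m n v \<and> (topple_step m n)\<^sup>*\<^sup>* (add_grain v c) c'))"

text \<open>Recurrent state of a finite-state Markov chain: every state reachable from it
can reach it back (i.e. it lies in a closed communicating class).\<close>
definition det_recurrent :: "nat \<Rightarrow> nat \<Rightarrow> (vert \<Rightarrow> nat) \<Rightarrow> bool" where
  "det_recurrent m n c = (stable m n c \<and>
     (\<forall>c'. (chain_step m n)\<^sup>*\<^sup>* c c' \<longrightarrow> (chain_step m n)\<^sup>*\<^sup>* c' c))"

end

theory Submission
  imports Defs
begin

lemma topple_at:
  "topple m n v a w = (if nonsink m n w then (if w = v then a w - deg m n v else a w) + (if adj m n v w then 1 else 0) else 0)"
  by (simp add: topple_def)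

lemma TT: "1 \<le> i' \<Longrightarrow> i' \<le> m \<Longrightarrow> topple m n (Top i) a (Top i') = (if i' = i then a (Top i') - n else a (Top i'))"
  by (simp add: topple_def nonsink_def adj_def deg_def)
lemma TB: "1 \<le> l \<Longrightarrow> l \<le> n \<Longrightarrow> i \<le> m \<Longrightarrow> topple m n (Top i) a (Bot l) = a (Bot l) + 1"
  by (simp add: topple_def nonsink_def adj_def deg_def is_vertex_def)
lemma BT: "1 \<le> i \<Longrightarrow> i \<le> m \<Longrightarrow> 1 \<le> l \<Longrightarrow> l \<le> n \<Longrightarrow> topple m n (Bot l) a (Top i) = a (Top i) + 1"
  by (simp add: topple_def nonsink_def adj_def deg_def is_vertex_def)
lemma BB: "1 \<le> l' \<Longrightarrow> l' \<le> n \<Longrightarrow> topple m n (Bot l) a (Bot l') = (if l' = l then a (Bot l') - (m+1) else a (Bot l'))"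
  by (simp add: topple_def nonsink_def adj_def deg_def)

lemma config_topple: "config m n (topple m n v a)"
  by (simp add: config_def topple_def)

definition mu :: "nat \<Rightarrow> nat \<Rightarrow> (vert \<Rightarrow> nat) \<Rightarrow> nat" where
  "mu m n a = (m+2) * (\<Sum>i=1..m. a (Top i)) + (m+1) * (\<Sum>l=1..n. a (Bot l))"

lemma mu_top:
  assumes "1 \<le> i0" "i0 \<le> m" "n \<le> a (Top i0)"
  shows "mu m n (topple m n (Top i0) a) + n = mu m n a"
proof -
  let ?a' = "topple m n (Top i0) a"
  have i0: "i0 \<in> {1..m}" using assms by auto
  have e1: "(\<Sum>i=1..m. a (Top i)) = a (Top i0) + (\<Sum>i\<in>{1..m}-{i0}. a (Top i))"
    using i0 by (simp add: sum.remove)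
  have e2: "(\<Sum>i=1..m. ?a' (Top i)) = ?a' (Top i0) + (\<Sum>i\<in>{1..m}-{i0}. ?a' (Top i))"
    using i0 by (simp add: sum.remove)
  have e3: "(\<Sum>i\<in>{1..m}-{i0}. ?a' (Top i)) = (\<Sum>i\<in>{1..m}-{i0}. a (Top i))"
    by (rule sum.cong) (auto simp: TT)
  have e4: "?a' (Top i0) = a (Top i0) - n" using assms by (simp add: TT)
  have "(\<Sum>l=1..n. ?a' (Bot l)) = (\<Sum>l=1..n. a (Bot l) + 1)"
    by (rule sum.cong) (use assms in \<open>auto simp: TB\<close>)
  also have "\<dots> = (\<Sum>l=1..n. a (Bot l)) + n" by (subst sum.distrib) simp
  finally have e5: "(\<Sum>l=1..n. ?a' (Bot l)) = (\<Sum>l=1..n. a (Bot l)) + n" .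
  have e6: "(\<Sum>i=1..m. ?a' (Top i)) + n = (\<Sum>i=1..m. a (Top i))"
    using e1 e2 e3 e4 assms(3) by simp
  show ?thesis unfolding mu_def e5 e6[symmetric] by (simp add: algebra_simps)
qed

lemma mu_bot:
  assumes "1 \<le> l0" "l0 \<le> n" "m + 1 \<le> a (Bot l0)"
  shows "mu m n (topple m n (Bot l0) a) + 1 = mu m n a"
proof -
  let ?a' = "topple m n (Bot l0) a"
  have l0: "l0 \<in> {1..n}" using assms by auto
  have e1: "(\<Sum>i=1..n. a (Bot i)) = a (Bot l0) + (\<Sum>i\<in>{1..n}-{l0}. a (Bot i))"
    using l0 by (simp add: sum.remove)
  have e2: "(\<Sum>i=1..n. ?a' (Bot i)) = ?a' (Bot l0) + (\<Sum>i\<in>{1..n}-{l0}. ?a' (Bot i))"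
    using l0 by (simp add: sum.remove)
  have e3: "(\<Sum>i\<in>{1..n}-{l0}. ?a' (Bot i)) = (\<Sum>i\<in>{1..n}-{l0}. a (Bot i))"
    by (rule sum.cong) (auto simp: BB)
  have e4: "?a' (Bot l0) = a (Bot l0) - (m+1)" using assms by (simp add: BB)
  have "(\<Sum>l=1..m. ?a' (Top l)) = (\<Sum>l=1..m. a (Top l) + 1)"
    by (rule sum.cong) (use assms in \<open>auto simp: BT\<close>)
  also have "\<dots> = (\<Sum>l=1..m. a (Top l)) + m" by (subst sum.distrib) simp
  finally have e5: "(\<Sum>l=1..m. ?a' (Top l)) = (\<Sum>l=1..m. a (Top l)) + m" .
  have e6: "(\<Sum>i=1..n. ?a' (Bot i)) + (m+1) = (\<Sum>i=1..n. a (Bot i))"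
    using e1 e2 e3 e4 assms(3) by simp
  show ?thesis unfolding mu_def e5 e6[symmetric] by (simp add: algebra_simps)
qed

lemma mu_step:
  assumes "n \<ge> 1" "topple_step m n a a'"
  shows "mu m n a' < mu m n a"
proof -
  obtain v where v: "nonsink m n v" "deg m n v \<le> a v" "a' = topple m n v a"
    using assms(2) by (auto simp: topple_step_def)
  show ?thesis
  proof (cases v)
    case (Top i)
    then show ?thesis using v mu_top[of i m n a] assms(1) by (auto simp: nonsink_def deg_def)
  next
    case (Bot l)
    then show ?thesis using v mu_bot[of l n m a] by (auto simp: nonsink_def deg_def)
  qed
qed

lemma stable_no_step: "stable m n a \<Longrightarrow> \<not> topple_step m n a b"
  by (auto simp: stable_def topple_step_def not_le[symmetric])

lemma stable_steps: "stable m n a \<Longrightarrow> (topple_step m n)\<^sup>*\<^sup>* a b \<Longrightarrow> b = a"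
  by (erule converse_rtranclpE) (auto dest: stable_no_step)

lemma nf_exists:
  assumes "n \<ge> 1" "config m n a"
  shows "\<exists>s. (topple_step m n)\<^sup>*\<^sup>* a s \<and> stable m n s"
  using assms(2)
proof (induction "mu m n a" arbitrary: a rule: less_induct)
  case less
  show ?case
  proof (cases "\<exists>v. nonsink m n v \<and> deg m n v \<le> a v")
    case True
    then obtain v where v: "nonsink m n v" "deg m n v \<le> a v" by blast
    have st: "topple_step m n a (topple m n v a)" using v by (auto simp: topple_step_def)
    have "mu m n (topple m n v a) < mu m n a" using mu_step[OF assms(1) st] .
    then obtain s where "(topple_step m n)\<^sup>*\<^sup>* (topple m n v a) s" "stable m n s"
      using less(1)[of "topple m n v a"] config_topple by blast
    then show ?thesis using st by (meson converse_rtranclp_into_rtranclp)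
  next
    case False
    then have "stable m n a" using less(2) by (auto simp: stable_def not_le)
    then show ?thesis by blast
  qed
qed

lemma topple_commute:
  assumes "v \<noteq> w" "deg m n v \<le> a v" "deg m n w \<le> a w"
  shows "topple m n w (topple m n v a) = topple m n v (topple m n w a)"
  using assms by (auto simp: topple_def fun_eq_iff)

lemma topple_keeps:
  assumes "v \<noteq> w" "nonsink m n w" "deg m n w \<le> a w"
  shows "deg m n w \<le> topple m n v a w"
  using assms by (auto simp: topple_def)

lemma nf_unique:
  assumes "n \<ge> 1"
  shows "(topple_step m n)\<^sup>*\<^sup>* a s1 \<Longrightarrow> stable m n s1 \<Longrightarrow> (topple_step m n)\<^sup>*\<^sup>* a s2 \<Longrightarrow> stable m n s2 \<Longrightarrow> s1 = s2"
proof (induction "mu m n a" arbitrary: a s1 s2 rule: less_induct)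
  case less
  from less.prems(1) show ?case
  proof (cases rule: converse_rtranclpE)
    case base
    then show ?thesis using less.prems stable_steps by metis
  next
    case (step a1)
    note s1 = step
    from less.prems(3) show ?thesis
    proof (cases rule: converse_rtranclpE)
      case base
      then show ?thesis using less.prems stable_steps by metis
    next
      case (step a2)
      note s2 = step
      show ?thesis
      proof (cases "a1 = a2")
        case True
        then show ?thesis using less.hyps[of a1] mu_step[OF assms s1(1)] s1 s2 less.prems by blast
      next
        case False
        obtain v where v: "nonsink m n v" "deg m n v \<le> a v" "a1 = topple m n v a"
          using s1(1) by (auto simp: topple_step_def)
        obtain w where w: "nonsink m n w" "deg m n w \<le> a w" "a2 = topple m n w a"
          using s2(1) by (auto simp: topple_step_def)
        have vw: "v \<noteq> w" using False v w by auto
        define a12 where "a12 = topple m n w a1"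
        have t1: "topple_step m n a1 a12" unfolding a12_def topple_step_def
          using topple_keeps[of v w m n a, OF vw w(1,2)] v w by auto
        have t2: "topple_step m n a2 a12" unfolding a12_def topple_step_def
          using topple_keeps[of w v m n a, OF vw[symmetric] v(1,2)] v w topple_commute[OF vw v(2) w(2)] by auto
        obtain s where s: "(topple_step m n)\<^sup>*\<^sup>* a12 s" "stable m n s"
          using nf_exists[OF assms, of m a12] config_topple a12_def by metis
        have "s1 = s" using less.hyps[of a1] mu_step[OF assms s1(1)] s1(2) less.prems(2) s t1
          by (meson converse_rtranclp_into_rtranclp)
        moreover have "s2 = s" using less.hyps[of a2] mu_step[OF assms s2(1)] s2(2) less.prems(4) s t2
          by (meson converse_rtranclp_into_rtranclp)
        ultimately show ?thesis by simp
      qed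
    qed
  qed
qed

definition plusc :: "(vert \<Rightarrow> nat) \<Rightarrow> (vert \<Rightarrow> nat) \<Rightarrow> vert \<Rightarrow> nat" where
  "plusc a y = (\<lambda>w. a w + y w)"

lemma topple_plus:
  assumes "config m n y" "deg m n v \<le> a v"
  shows "topple m n v (plusc a y) = plusc (topple m n v a) y"
  using assms by (auto simp: topple_def plusc_def fun_eq_iff config_def)

lemma step_plus: "config m n y \<Longrightarrow> topple_step m n a a' \<Longrightarrow> topple_step m n (plusc a y) (plusc a' y)"
  unfolding topple_step_def using topple_plus by (fastforce simp: plusc_def)

lemma steps_plus: assumes "config m n y" shows "(topple_step m n)\<^sup>*\<^sup>* a a' \<Longrightarrow> (topple_step m n)\<^sup>*\<^sup>* (plusc a y) (plusc a' y)"
proof (induction rule: rtranclp_induct)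
  case (step b c)
  then show ?case using step_plus[OF assms, of b c] by (meson rtranclp.rtrancl_into_rtrancl)
qed simp

definition Vs :: "nat \<Rightarrow> nat \<Rightarrow> vert set" where
  "Vs m n = Top ` {1..m} \<union> Bot ` {1..n}"

lemma finite_Vs: "finite (Vs m n)" by (simp add: Vs_def)

lemma nonsink_Vs: "nonsink m n v \<longleftrightarrow> v \<in> Vs m n"
  by (cases v) (auto simp: nonsink_def Vs_def)

lemma config_plus: "config m n a \<Longrightarrow> config m n y \<Longrightarrow> config m n (plusc a y)"
  by (simp add: config_def plusc_def)

lemma chain_lemma:
  assumes "n \<ge> 1"
  shows "stable m n d \<Longrightarrow> config m n y \<Longrightarrow> sum y (Vs m n) = N \<Longrightarrow>
    (topple_step m n)\<^sup>*\<^sup>* (plusc d y) s \<Longrightarrow> stable m n s \<Longrightarrow> (chain_step m n)\<^sup>*\<^sup>* d s"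
proof (induction N arbitrary: d y)
  case 0
  then have "\<forall>w. y w = 0" using finite_Vs nonsink_Vs by (auto simp: config_def)
  then have "plusc d y = d" by (simp add: plusc_def)
  then show ?case using 0 stable_steps by fastforce
next
  case (Suc N)
  then obtain v where v: "v \<in> Vs m n" "y v > 0"
    by (metis finite_Vs not_gr_zero sum_eq_0_iff nat.distinct(1))
  define y' where "y' = y(v := y v - 1)"
  define d1 where "d1 = add_grain v d"
  have ns: "nonsink m n v" using v nonsink_Vs by simp
  have cy': "config m n y'" using Suc.prems(2) ns by (auto simp: config_def y'_def)
  have eq: "plusc d y = plusc d1 y'" using v by (auto simp: plusc_def d1_def y'_def add_grain_def fun_eq_iff)
  have "sum y (Vs m n) = y v + sum y (Vs m n - {v})" using v finite_Vs by (simp add: sum.remove)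
  moreover have "sum y' (Vs m n) = y' v + sum y' (Vs m n - {v})" using v finite_Vs by (simp add: sum.remove)
  moreover have "sum y' (Vs m n - {v}) = sum y (Vs m n - {v})" by (rule sum.cong) (auto simp: y'_def)
  ultimately have sy': "sum y' (Vs m n) = N" using Suc.prems(3) v by (simp add: y'_def)
  have cd1: "config m n d1" using Suc.prems(1) ns by (auto simp: config_def stable_def d1_def add_grain_def)
  obtain d1' where d1': "(topple_step m n)\<^sup>*\<^sup>* d1 d1'" "stable m n d1'"
    using nf_exists[OF assms cd1] by blast
  have cs: "chain_step m n d d1'" unfolding chain_step_def using Suc.prems(1) d1' ns d1_def by blast
  have st: "(topple_step m n)\<^sup>*\<^sup>* (plusc d1 y') (plusc d1' y')" using steps_plus[OF cy' d1'(1)] .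
  have "config m n (plusc d1' y')" using config_plus cy' d1'(2) by (auto simp: stable_def)
  then obtain s' where s': "(topple_step m n)\<^sup>*\<^sup>* (plusc d1' y') s'" "stable m n s'"
    using nf_exists[OF assms] by blast
  have "s' = s" using nf_unique[OF assms] st s' Suc.prems(4,5) eq by (metis rtranclp_trans)
  then have "(chain_step m n)\<^sup>*\<^sup>* d1' s" using Suc.IH[OF d1'(2) cy' sy'] s' by blast
  then show ?case using cs by (meson converse_rtranclp_into_rtranclp)
qed

definition cmax :: "nat \<Rightarrow> nat \<Rightarrow> vert \<Rightarrow> nat" where
  "cmax m n = (\<lambda>w. if nonsink m n w then deg m n w - 1 else 0)"

lemma stable_cmax: "n \<ge> 1 \<Longrightarrow> stable m n (cmax m n)"
  by (auto simp: stable_def config_def cmax_def deg_def split: vert.splits)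

lemma chain_from_below:
  assumes "n \<ge> 1" "stable m n d" "stable m n s" "config m n a" "\<forall>w. d w \<le> a w"
    "(topple_step m n)\<^sup>*\<^sup>* a s"
  shows "(chain_step m n)\<^sup>*\<^sup>* d s"
proof -
  define y where "y = (\<lambda>w. a w - d w)"
  have "plusc d y = a" using assms(5) by (auto simp: plusc_def y_def fun_eq_iff)
  moreover have "config m n y" using assms(4) by (auto simp: config_def y_def)
  ultimately show ?thesis using chain_lemma[OF assms(1) assms(2)] assms(3,6) by metis
qed

lemma reach_cmax:
  assumes "n \<ge> 1" "stable m n c"
  shows "(chain_step m n)\<^sup>*\<^sup>* c (cmax m n)"
proof (rule chain_from_below[OF assms(1,2) stable_cmax[OF assms(1)]])
  show "config m n (cmax m n)" by (simp add: config_def cmax_def)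
  show "\<forall>w. c w \<le> cmax m n w" using assms(2)
    by (auto simp: stable_def config_def cmax_def)
qed simp

lemma chain_stable: "(chain_step m n)\<^sup>*\<^sup>* c c' \<Longrightarrow> stable m n c \<Longrightarrow> stable m n c'"
  by (induction rule: rtranclp_induct) (auto simp: chain_step_def)

definition Tc :: "nat \<Rightarrow> (vert \<Rightarrow> nat) \<Rightarrow> nat \<Rightarrow> nat" where
  "Tc m a j = card {i\<in>{1..m}. a (Top i) < j}"
definition Bc :: "nat \<Rightarrow> (vert \<Rightarrow> nat) \<Rightarrow> nat \<Rightarrow> nat" where
  "Bc n a y = card {l\<in>{1..n}. a (Bot l) < y}"
definition G :: "nat \<Rightarrow> nat \<Rightarrow> (vert \<Rightarrow> nat) \<Rightarrow> bool" where
  "G m n a = (\<forall>j\<in>{1..n}. Bc n a (Tc m a j) < j)"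

lemma Bc_mono: "y \<le> y' \<Longrightarrow> Bc n a y \<le> Bc n a y'"
  unfolding Bc_def by (rule card_mono) auto

lemma G_mono:
  assumes "G m n a" "\<forall>i\<in>{1..m}. a (Top i) \<le> a' (Top i)" "\<forall>l\<in>{1..n}. a (Bot l) \<le> a' (Bot l)"
  shows "G m n a'"
  unfolding G_def
proof
  fix j assume j: "j \<in> {1..n}"
  have "{i\<in>{1..m}. a' (Top i) < j} \<subseteq> {i\<in>{1..m}. a (Top i) < j}"
  proof
    fix x assume "x \<in> {i\<in>{1..m}. a' (Top i) < j}"
    then have "x\<in>{1..m}" "a' (Top x) < j" by auto
    then show "x \<in> {i\<in>{1..m}. a (Top i) < j}" using assms(2) le_less_trans by fastforce
  qed
  then have "Tc m a' j \<le> Tc m a j" unfolding Tc_def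
    by (intro card_mono) auto
  hence "Bc n a' (Tc m a' j) \<le> Bc n a' (Tc m a j)" by (rule Bc_mono)
  also have "\<dots> \<le> Bc n a (Tc m a j)"
  proof -
    have "{l\<in>{1..n}. a' (Bot l) < Tc m a j} \<subseteq> {l\<in>{1..n}. a (Bot l) < Tc m a j}"
    proof
      fix x assume "x \<in> {l\<in>{1..n}. a' (Bot l) < Tc m a j}"
      then have "x\<in>{1..n}" "a' (Bot x) < Tc m a j" by auto
      then show "x \<in> {l\<in>{1..n}. a (Bot l) < Tc m a j}" using assms(3) le_less_trans by fastforce
    qed
    then show ?thesis unfolding Bc_def by (intro card_mono) auto
  qed
  also have "\<dots> < j" using assms(1) j by (auto simp: G_def)
  finally show "Bc n a' (Tc m a' j) < j" .
qed

lemma card_insert_le1: "finite A \<Longrightarrow> card (insert x A) \<le> card A + 1"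
  by (simp add: card_insert_if)

lemma G_top:
  assumes "G m n a" "1 \<le> i0" "i0 \<le> m"
  shows "G m n (topple m n (Top i0) a)"
  unfolding G_def
proof
  let ?a' = "topple m n (Top i0) a"
  fix j assume j: "j \<in> {1..n}"
  have "Tc m ?a' j \<le> card (insert i0 {i\<in>{1..m}. a (Top i) < j})" unfolding Tc_def
    by (rule card_mono) (auto simp: TT)
  also have "\<dots> \<le> Tc m a j + 1" unfolding Tc_def by (rule card_insert_le1) simp
  finally have "Bc n ?a' (Tc m ?a' j) \<le> Bc n ?a' (Tc m a j + 1)" by (rule Bc_mono)
  also have "\<dots> \<le> Bc n a (Tc m a j)" unfolding Bc_def
    by (rule card_mono) (use assms in \<open>auto simp: TB\<close>)
  also have "\<dots> < j" using assms(1) j by (auto simp: G_def)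
  finally show "Bc n ?a' (Tc m ?a' j) < j" .
qed

lemma G_bot:
  assumes "G m n a" "1 \<le> l0" "l0 \<le> n"
  shows "G m n (topple m n (Bot l0) a)"
  unfolding G_def
proof
  let ?a' = "topple m n (Bot l0) a"
  fix j assume j: "j \<in> {1..n}"
  show "Bc n ?a' (Tc m ?a' j) < j"
  proof (cases "j = 1")
    case True
    have "Tc m ?a' j = 0" unfolding Tc_def using True assms(2,3) by (auto simp: BT)
    then show ?thesis using True by (simp add: Bc_def)
  next
    case False
    have "Tc m ?a' j = Tc m a (j - 1)" unfolding Tc_def
      by (rule arg_cong[where f=card]) (use assms in \<open>auto simp: BT\<close>)
    moreover have "Bc n ?a' y \<le> Bc n a y + 1" for y
    proof -
      have "Bc n ?a' y \<le> card (insert l0 {l\<in>{1..n}. a (Bot l) < y})" unfolding Bc_def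
        by (rule card_mono) (auto simp: BB)
      also have "\<dots> \<le> Bc n a y + 1" unfolding Bc_def by (rule card_insert_le1) simp
      finally show ?thesis .
    qed
    moreover have "Bc n a (Tc m a (j - 1)) < j - 1" 
    proof -
      have "j - 1 \<in> {1..n}" using j False by auto
      then show ?thesis using assms(1) unfolding G_def by blast
    qed
    ultimately show ?thesis using j False by (metis add_less_cancel_right le_add_diff_inverse2 le_less_trans
          atLeastAtMost_iff)
  qed
qed

lemma G_step: "topple_step m n a a' \<Longrightarrow> G m n a \<Longrightarrow> G m n a'"
proof -
  assume "topple_step m n a a'" "G m n a"
  then obtain v where v: "nonsink m n v" "a' = topple m n v a" by (auto simp: topple_step_def)
  show ?thesis
  proof (cases v)
    case (Top i) then show ?thesis using v G_top[OF \<open>G m n a\<close>, of i] by (auto simp: nonsink_def)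
  next
    case (Bot l) then show ?thesis using v G_bot[OF \<open>G m n a\<close>, of l] by (auto simp: nonsink_def)
  qed
qed

lemma G_steps: "(topple_step m n)\<^sup>*\<^sup>* a a' \<Longrightarrow> G m n a \<Longrightarrow> G m n a'"
  by (induction rule: rtranclp_induct) (auto intro: G_step)

lemma G_chain: "chain_step m n d d' \<Longrightarrow> G m n d \<Longrightarrow> G m n d'"
proof -
  assume cs: "chain_step m n d d'" and g: "G m n d"
  then obtain v where "(topple_step m n)\<^sup>*\<^sup>* (add_grain v d) d'"
    by (auto simp: chain_step_def)
  moreover have "G m n (add_grain v d)"
    by (rule G_mono[OF g]) (auto simp: add_grain_def)
  ultimately show ?thesis using G_steps by blast
qed

lemma G_chains: "(chain_step m n)\<^sup>*\<^sup>* d d' \<Longrightarrow> G m n d \<Longrightarrow> G m n d'"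
  by (induction rule: rtranclp_induct) (auto intro: G_chain)

lemma G_cmax: "G m n (cmax m n)"
  unfolding G_def
proof
  fix j assume j: "j \<in> {1..n}"
  show "Bc n (cmax m n) (Tc m (cmax m n) j) < j"
  proof (cases "j < n")
    case True
    have "Tc m (cmax m n) j = 0" unfolding Tc_def using True
      by (auto simp: cmax_def nonsink_def deg_def)
    then show ?thesis using j by (simp add: Bc_def)
  next
    case False
    have "Tc m (cmax m n) j \<le> m" unfolding Tc_def
      by (metis (no_types, lifting) card_atLeastAtMost card_mono diff_Suc_1 finite_atLeastAtMost mem_Collect_eq subsetI)
    hence "Bc n (cmax m n) (Tc m (cmax m n) j) \<le> Bc n (cmax m n) m" by (rule Bc_mono)
    also have "\<dots> = 0" unfolding Bc_def by (auto simp: cmax_def nonsink_def deg_def)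
    finally show ?thesis using j by simp
  qed
qed

definition S :: "nat \<Rightarrow> nat \<Rightarrow> (vert \<Rightarrow> nat) \<Rightarrow> nat set \<Rightarrow> nat set \<Rightarrow> vert \<Rightarrow> nat" where
  "S m n a P Q = (\<lambda>w. case w of
     Top i \<Rightarrow> if 1 \<le> i \<and> i \<le> m then a (Top i) + card Q - (if i \<in> P then n else 0) else 0
   | Bot l \<Rightarrow> if 1 \<le> l \<and> l \<le> n then a (Bot l) + card P - (if l \<in> Q then m+1 else 0) else 0)"

lemma S_top:
  assumes "P \<subseteq> {1..m}" "Q \<subseteq> {1..n}" "i \<in> {1..m}" "i \<notin> P" "n \<le> a (Top i) + card Q"
    "\<forall>l\<in>Q. m+1 \<le> a (Bot l) + card P"
  shows "topple_step m n (S m n a P Q) (S m n a (insert i P) Q)"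
proof -
  have fP: "finite P" using assms(1) finite_subset by blast
  have "topple m n (Top i) (S m n a P Q) = S m n a (insert i P) Q"
  proof (rule ext)
    fix w show "topple m n (Top i) (S m n a P Q) w = S m n a (insert i P) Q w"
      using assms fP by (cases w) (auto simp: topple_def S_def nonsink_def deg_def adj_def is_vertex_def)
  qed
  moreover have "deg m n (Top i) \<le> S m n a P Q (Top i)" using assms by (auto simp: S_def deg_def)
  moreover have "nonsink m n (Top i)" using assms by (auto simp: nonsink_def)
  ultimately show ?thesis unfolding topple_step_def by metis
qed

lemma S_bot:
  assumes "P \<subseteq> {1..m}" "Q \<subseteq> {1..n}" "l \<in> {1..n}" "l \<notin> Q" "m + 1 \<le> a (Bot l) + card P"
    "\<forall>i\<in>P. n \<le> a (Top i) + card Q"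
  shows "topple_step m n (S m n a P Q) (S m n a P (insert l Q))"
proof -
  have fQ: "finite Q" using assms(2) finite_subset by blast
  have "topple m n (Bot l) (S m n a P Q) = S m n a P (insert l Q)"
  proof (rule ext)
    fix w show "topple m n (Bot l) (S m n a P Q) w = S m n a P (insert l Q) w"
      using assms fQ by (cases w) (auto simp: topple_def S_def nonsink_def deg_def adj_def is_vertex_def)
  qed
  moreover have "deg m n (Bot l) \<le> S m n a P Q (Bot l)" using assms by (auto simp: S_def deg_def)
  moreover have "nonsink m n (Bot l)" using assms by (auto simp: nonsink_def)
  ultimately show ?thesis unfolding topple_step_def by metis
qed

definition bet :: "nat \<Rightarrow> nat \<Rightarrow> vert \<Rightarrow> nat" where
  "bet n k = (\<lambda>w. case w of Bot l \<Rightarrow> if 1 \<le> l \<and> l \<le> n then k else 0 | Top _ \<Rightarrow> 0)"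

lemma config_bet: "config m n (bet n k)"
  by (auto simp: config_def bet_def nonsink_def split: vert.splits)

lemma S_empty: "config m n a \<Longrightarrow> S m n a {} {} = a"
  by (auto simp: S_def config_def nonsink_def fun_eq_iff split: vert.splits)

lemma burn_ind:
  assumes G: "G m n c"
  defines "a \<equiv> plusc c (bet n 1)"
  shows "\<forall>P Q. P \<subseteq> {1..m} \<longrightarrow> Q \<subseteq> {1..n} \<longrightarrow> (\<forall>i\<in>P. n \<le> a (Top i) + card Q) \<longrightarrow>
     (\<forall>l\<in>Q. m+1 \<le> a (Bot l) + card P) \<longrightarrow> m + n - card P - card Q = N \<longrightarrow>
     (topple_step m n)\<^sup>*\<^sup>* (S m n a P Q) (S m n a {1..m} {1..n})"
proof (induction N)
  case 0
  show ?case
  proof (intro allI impI)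
    fix P Q assume h: "P \<subseteq> {1..m}" "Q \<subseteq> {1..n}" "m + n - card P - card Q = 0"
    have "card P \<le> m" "card Q \<le> n" using h card_mono[of "{1..m}" P] card_mono[of "{1..n}" Q] by auto
    then have "card P = card {1..m}" "card Q = card {1..n}" using h by auto
    then have "P = {1..m}" "Q = {1..n}" using h card_subset_eq by (metis finite_atLeastAtMost)+
    then show "(topple_step m n)\<^sup>*\<^sup>* (S m n a P Q) (S m n a {1..m} {1..n})" by simp
  qed
next
  case (Suc N)
  show ?case
  proof (intro allI impI)
    fix P Q assume h: "P \<subseteq> {1..m}" "Q \<subseteq> {1..n}" "\<forall>i\<in>P. n \<le> a (Top i) + card Q"
      "\<forall>l\<in>Q. m+1 \<le> a (Bot l) + card P" "m + n - card P - card Q = Suc N"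
    have fP: "finite P" and fQ: "finite Q" using h finite_subset by blast+
    have cP: "card P \<le> m" and cQ: "card Q \<le> n" using h card_mono[of "{1..m}" P] card_mono[of "{1..n}" Q] by auto
    have aT: "a (Top i) = c (Top i)" for i by (simp add: a_def plusc_def bet_def)
    have aB: "l \<in> {1..n} \<Longrightarrow> a (Bot l) = c (Bot l) + 1" for l by (simp add: a_def plusc_def bet_def)
    have ex: "(\<exists>i\<in>{1..m}. i \<notin> P \<and> n \<le> a (Top i) + card Q) \<or> (\<exists>l\<in>{1..n}. l \<notin> Q \<and> m + 1 \<le> a (Bot l) + card P)"
    proof (rule ccontr)
      assume "\<not> ?thesis"
      then have H1: "\<forall>i\<in>{1..m}-P. c (Top i) + card Q < n" and H2: "\<forall>l\<in>{1..n}-Q. c (Bot l) + card P < m"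
        using aT aB by force+
      show False
      proof (cases "Q = {1..n}")
        case True
        then have "{1..m} - P = {}" using H1 by auto
        then have "P = {1..m}" using h by auto
        then show False using True h(5) by simp
      next
        case False
        then have "card Q < n" using h(2) psubset_card_mono[of "{1..n}" Q] by auto
        define j where "j = n - card Q"
        have j: "j \<in> {1..n}" using \<open>card Q < n\<close> by (auto simp: j_def)
        have "m - card P = card ({1..m} - P)" using h(1) fP by (simp add: card_Diff_subset)
        also have "\<dots> \<le> Tc m c j" unfolding Tc_def
          by (rule card_mono)
          (use H1 in \<open>auto simp: j_def less_diff_conv\<close>)
        finally have t: "m - card P \<le> Tc m c j" .
        have "j = card ({1..n} - Q)" using h(2) fQ by (simp add: card_Diff_subset j_def)
        also have "\<dots> \<le> Bc n c (m - card P)" unfolding Bc_def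
          by (rule card_mono) (use H2 in \<open>auto simp: less_diff_conv\<close>)
        also have "\<dots> \<le> Bc n c (Tc m c j)" using t by (rule Bc_mono)
        finally have "j \<le> Bc n c (Tc m c j)" .
        moreover have "Bc n c (Tc m c j) < j" using G j unfolding G_def by blast
        ultimately show False by simp
      qed
    qed
    then show "(topple_step m n)\<^sup>*\<^sup>* (S m n a P Q) (S m n a {1..m} {1..n})"
    proof
      assume "\<exists>i\<in>{1..m}. i \<notin> P \<and> n \<le> a (Top i) + card Q"
      then obtain i where i: "i \<in> {1..m}" "i \<notin> P" "n \<le> a (Top i) + card Q" by blast
      have st: "topple_step m n (S m n a P Q) (S m n a (insert i P) Q)"
        using S_top[OF h(1,2) i h(4)] .
      have "card (insert i P) = card P + 1" using fP i by simp
      then have "m + n - card (insert i P) - card Q = N" using h(5) by simp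
      moreover have "insert i P \<subseteq> {1..m}" using h(1) i by auto
      moreover have "\<forall>i'\<in>insert i P. n \<le> a (Top i') + card Q" using h(3) i by auto
      moreover have "\<forall>l\<in>Q. m+1 \<le> a (Bot l) + card (insert i P)"
        using h(4) \<open>card (insert i P) = card P + 1\<close> by auto
      ultimately have "(topple_step m n)\<^sup>*\<^sup>* (S m n a (insert i P) Q) (S m n a {1..m} {1..n})"
        using Suc.IH h(2) by blast
      then show ?thesis using st by (meson converse_rtranclp_into_rtranclp)
    next
      assume "\<exists>l\<in>{1..n}. l \<notin> Q \<and> m + 1 \<le> a (Bot l) + card P"
      then obtain l where l: "l \<in> {1..n}" "l \<notin> Q" "m + 1 \<le> a (Bot l) + card P" by blast
      have st: "topple_step m n (S m n a P Q) (S m n a P (insert l Q))"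
        using S_bot[OF h(1,2) l h(3)] .
      have "card (insert l Q) = card Q + 1" using fQ l by simp
      then have "m + n - card P - card (insert l Q) = N" using h(5) by simp
      moreover have "insert l Q \<subseteq> {1..n}" using h(2) l by auto
      moreover have "\<forall>l'\<in>insert l Q. m+1 \<le> a (Bot l') + card P" using h(4) l by auto
      moreover have "\<forall>i\<in>P. n \<le> a (Top i) + card (insert l Q)"
        using h(3) \<open>card (insert l Q) = card Q + 1\<close> by auto
      ultimately have "(topple_step m n)\<^sup>*\<^sup>* (S m n a P (insert l Q)) (S m n a {1..m} {1..n})"
        using Suc.IH h(1) by blast
      then show ?thesis using st by (meson converse_rtranclp_into_rtranclp)
    qed
  qed
qed

lemma burn:
  assumes "G m n c" "stable m n c"
  shows "(topple_step m n)\<^sup>*\<^sup>* (plusc c (bet n 1)) c"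
proof -
  let ?a = "plusc c (bet n 1)"
  have cc: "config m n c" using assms(2) by (simp add: stable_def)
  have "(topple_step m n)\<^sup>*\<^sup>* (S m n ?a {} {}) (S m n ?a {1..m} {1..n})"
    using burn_ind[OF assms(1)] by simp
  moreover have "S m n ?a {} {} = ?a" using S_empty config_plus[OF cc config_bet] by blast
  moreover have "S m n ?a {1..m} {1..n} = c" using cc
    by (auto simp: S_def plusc_def bet_def fun_eq_iff config_def nonsink_def split: vert.splits)
  ultimately show ?thesis by simp
qed

lemma burn_iter:
  assumes "G m n c" "stable m n c"
  shows "(topple_step m n)\<^sup>*\<^sup>* (plusc c (bet n K)) c"
proof (induction K)
  case 0
  have "plusc c (bet n 0) = c" by (auto simp: plusc_def bet_def fun_eq_iff split: vert.splits)
  then show ?case by simp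
next
  case (Suc K)
  have "plusc c (bet n (Suc K)) = plusc (plusc c (bet n 1)) (bet n K)"
    by (auto simp: plusc_def bet_def fun_eq_iff split: vert.splits)
  moreover have "(topple_step m n)\<^sup>*\<^sup>* (plusc (plusc c (bet n 1)) (bet n K)) (plusc c (bet n K))"
    using steps_plus[OF config_bet burn[OF assms]] .
  ultimately show ?case using Suc.IH by (metis rtranclp_trans)
qed

lemma bottoms:
  assumes "config m n a" "\<forall>l\<in>{1..n}. m + 1 \<le> a (Bot l)"
  shows "Q \<subseteq> {1..n} \<Longrightarrow> (topple_step m n)\<^sup>*\<^sup>* a (S m n a {} Q)"
proof (induction Q rule: infinite_finite_induct)
  case (infinite A)
  then show ?case using finite_subset by blast
next
  case empty
  then show ?case using S_empty[OF assms(1)] by simp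
next
  case (insert l Q)
  have "topple_step m n (S m n a {} Q) (S m n a {} (insert l Q))"
    using S_bot[of "{}" m Q n l a] insert assms(2) by auto
  then show ?case using insert by (meson rtranclp.rtrancl_into_rtrancl subset_insertI2 insert_subset)
qed

lemma good_reach:
  assumes "n \<ge> 1" "G m n c" "stable m n c"
  shows "(chain_step m n)\<^sup>*\<^sup>* (cmax m n) c"
proof -
  have cc: "config m n c" using assms(3) by (simp add: stable_def)
  define a2 where "a2 = plusc c (bet n (2*m+1))"
  have ca2: "config m n a2" unfolding a2_def using config_plus[OF cc config_bet] .
  have "\<forall>l\<in>{1..n}. m + 1 \<le> a2 (Bot l)" by (auto simp: a2_def plusc_def bet_def)
  then have s1: "(topple_step m n)\<^sup>*\<^sup>* a2 (S m n a2 {} {1..n})" using bottoms[OF ca2] by blast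
  define w where "w = S m n a2 {} {1..n}"
  have cw: "config m n w" by (auto simp: w_def S_def config_def nonsink_def split: vert.splits)
  obtain s where s: "(topple_step m n)\<^sup>*\<^sup>* w s" "stable m n s" using nf_exists[OF assms(1) cw] by blast
  have "s = c" using nf_unique[OF assms(1)] s s1 burn_iter[OF assms(2,3)] assms(3)
    unfolding w_def a2_def by (meson rtranclp_trans)
  moreover have "\<forall>v. cmax m n v \<le> w v"
    by (auto simp: w_def S_def a2_def plusc_def bet_def cmax_def nonsink_def deg_def split: vert.splits)
  ultimately show ?thesis using chain_from_below[OF assms(1) stable_cmax[OF assms(1)] assms(3) cw] s by blast
qed

lemma sort_nth_ge:
  fixes xs :: "nat list"
  assumes "1 \<le> j" "j \<le> length xs"
  shows "(k \<le> sort xs ! (j - 1)) \<longleftrightarrow> length (filter (\<lambda>x. x < k) xs) < j"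
proof -
  define ys where "ys = sort xs"
  have sy: "sorted ys" and ly: "length ys = length xs" by (simp_all add: ys_def)
  have "length (filter (\<lambda>x. x < k) ys) = length (filter (\<lambda>x. x < k) xs)"
    by (simp add: ys_def filter_sort)
  moreover have lf: "length (filter (\<lambda>x. x < k) ys) = card {i. i < length ys \<and> ys ! i < k}"
    by (rule length_filter_conv_card)
  moreover have "(k \<le> ys ! (j - 1)) \<longleftrightarrow> card {i. i < length ys \<and> ys ! i < k} < j"
  proof
    assume h: "k \<le> ys ! (j - 1)"
    have "{i. i < length ys \<and> ys ! i < k} \<subseteq> {..<j-1}"
    proof
      fix i assume i: "i \<in> {i. i < length ys \<and> ys ! i < k}"
      show "i \<in> {..<j-1}"
      proof (rule ccontr)
        assume "i \<notin> {..<j-1}"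
        then have "ys ! (j-1) \<le> ys ! i" using sorted_nth_mono[OF sy] i by auto
        then show False using h i by auto
      qed
    qed
    then have "card {i. i < length ys \<and> ys ! i < k} \<le> j - 1"
      by (metis card_lessThan card_mono finite_lessThan)
    then show "card {i. i < length ys \<and> ys ! i < k} < j" using assms by linarith
  next
    assume h: "card {i. i < length ys \<and> ys ! i < k} < j"
    show "k \<le> ys ! (j - 1)"
    proof (rule ccontr)
      assume "\<not> k \<le> ys ! (j - 1)"
      then have "{..<j} \<subseteq> {i. i < length ys \<and> ys ! i < k}"
      proof (intro subsetI)
        fix i assume "\<not> k \<le> ys ! (j - 1)" "i \<in> {..<j}"
        then show "i \<in> {i. i < length ys \<and> ys ! i < k}"
        proof -
          have "i \<le> j - 1" "j - 1 < length ys" using \<open>i \<in> {..<j}\<close> assms ly by auto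
          then have "ys ! i \<le> ys ! (j - 1)" using sorted_nth_mono[OF sy] by blast
          then show ?thesis using \<open>i \<le> j - 1\<close> \<open>j - 1 < length ys\<close> \<open>\<not> k \<le> ys ! (j - 1)\<close> by auto
        qed
      qed
      then have "j \<le> card {i. i < length ys \<and> ys ! i < k}"
        by (metis card_lessThan card_mono finite_Collect_conjI finite_Collect_less_nat)
      then show False using h by simp
    qed
  qed
  ultimately show ?thesis by (simp add: ys_def)
qed

lemma filter_count:
  "length (filter (\<lambda>x. x < k) (map b [1..<n+1])) = card {l\<in>{1..n}. b l < k}"
proof -
  have "length (filter (\<lambda>x. x < k) (map b [1..<n+1])) = length (filter (\<lambda>l. b l < k) [1..<n+1])"
    by (simp add: filter_map comp_def)
  also have "\<dots> = card (set (filter (\<lambda>l. b l < k) [1..<n+1]))"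
    by (rule distinct_card[symmetric]) simp
  also have "set (filter (\<lambda>l. b l < k) [1..<n+1]) = {l\<in>{1..n}. b l < k}" by auto
  finally show ?thesis .
qed

lemma cond_iff_G:
  "(\<forall>j\<in>{1..n}. sort (map (\<lambda>l. c (Bot l)) [1..<n+1]) ! (j - 1) \<ge> card {i \<in> {1..m}. c (Top i) < j})
   \<longleftrightarrow> G m n c"
  unfolding G_def Tc_def Bc_def
  using sort_nth_ge[of _ "map (\<lambda>l. c (Bot l)) [1..<n+1]"] filter_count[of _ "\<lambda>l. c (Bot l)" n]
  by auto

theorem theorem4p1:
  fixes m n :: nat and c :: "vert \<Rightarrow> nat"
  assumes "n \<ge> 1" and "stable m n c"
  shows "det_recurrent m n c \<longleftrightarrow>
    (\<forall>j\<in>{1..n}.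
       sort (map (\<lambda>l. c (Bot l)) [1..<n+1]) ! (j - 1)
         \<ge> card {i \<in> {1..m}. c (Top i) < j})"
  unfolding cond_iff_G
proof
  assume "det_recurrent m n c"
  then have "(chain_step m n)\<^sup>*\<^sup>* (cmax m n) c"
    using reach_cmax[OF assms] by (auto simp: det_recurrent_def)
  then show "G m n c" using G_chains G_cmax by blast
next
  assume g: "G m n c"
  have r: "(chain_step m n)\<^sup>*\<^sup>* (cmax m n) c" using good_reach[OF assms(1) g assms(2)] .
  show "det_recurrent m n c" unfolding det_recurrent_def
  proof (intro conjI allI impI)
    fix c' assume "(chain_step m n)\<^sup>*\<^sup>* c c'"
    then have "stable m n c'" using chain_stable assms(2) by blast
    then show "(chain_step m n)\<^sup>*\<^sup>* c' c" using reach_cmax[OF assms(1)] r by (meson rtranclp_trans)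
  qed (rule assms(2))
qed

end
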